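(* Let $p$ be a prime and let $\mathcal{F}$ be a linear, affine-invariant family of functions $\mathbb{F}_p^n\to\mathbb{F}_p$. Suppose $x^e\in\mathcal{F}$ for some $e\in\{0,\dots,p-1\}^n$. Then $x^{e'}\in\mathcal{F}$ for every $e'\in\{0,\dots,p-1\}^n$ with $|e'|_1\leq|e|_1$.
   Context: For $e\in\{0,\dots,p-1\}^n$, $x^e$ denotes the function $x\mapsto\prod_{i=1}^n x_i^{e_i}$ on $\mathbb{F}_p^n$ (with $0^0=1$), and $|e|_1=\sum_i e_i$. A family $\mathcal{F}$ of functions $\mathbb{F}_p^n\to\mathbb{F}_p$ is linear if it contains the zero function and is closed under $\mathbb{F}_p$-linear combinations; it is affine-invariant if $f\circ T\in\mathcal{F}$ whenever $f\in\mathcal{F}$ and $T:\mathbb{F}_p^n\to\mathbb{F}_p^n$ is an affine transformation. *)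

theory Defs
  imports "Berlekamp_Zassenhaus.Finite_Field"
begin

text \<open>Points of F_p^n are functions 'n => 'p mod_ring, with 'n a finite index type
  (n = CARD('n)) and 'p a type of prime cardinality p.\<close>

definition monomial_fun :: "('n::finite \<Rightarrow> nat) \<Rightarrow> ('n \<Rightarrow> 'p::prime_card mod_ring) \<Rightarrow> 'p mod_ring" where
  "monomial_fun e = (\<lambda>x. \<Prod>i\<in>UNIV. x i ^ e i)"

definition deg1 :: "('n::finite \<Rightarrow> nat) \<Rightarrow> nat" where
  "deg1 e = (\<Sum>i\<in>UNIV. e i)"

definition linear_family :: "(('n::finite \<Rightarrow> 'p::prime_card mod_ring) \<Rightarrow> 'p mod_ring) set \<Rightarrow> bool" where
  "linear_family F \<longleftrightarrow> (\<lambda>x. 0) \<in> F \<and>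
     (\<forall>f\<in>F. \<forall>g\<in>F. \<forall>a b. (\<lambda>x. a * f x + b * g x) \<in> F)"

definition affine_map :: "(('n::finite \<Rightarrow> 'p::prime_card mod_ring) \<Rightarrow> ('n \<Rightarrow> 'p mod_ring)) \<Rightarrow> bool" where
  "affine_map T \<longleftrightarrow> (\<exists>A b. \<forall>x. T x = (\<lambda>i. (\<Sum>j\<in>UNIV. A i j * x j) + b i))"

definition affine_invariant :: "(('n::finite \<Rightarrow> 'p::prime_card mod_ring) \<Rightarrow> 'p mod_ring) set \<Rightarrow> bool" where
  "affine_invariant F \<longleftrightarrow> (\<forall>f\<in>F. \<forall>T. affine_map T \<longrightarrow> f \<circ> T \<in> F)"

end

theory Submission imports Defs "Berlekamp_Zassenhaus.Berlekamp_Type_Based" begin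

lemma lf_scale:
  assumes "linear_family F" "f \<in> F" shows "(\<lambda>x. c * f x) \<in> F"
proof -
  have "(\<lambda>x. c * f x + 0 * f x) \<in> F" using assms unfolding linear_family_def by blast
  thus ?thesis by simp
qed

lemma lf_add:
  assumes "linear_family F" "f \<in> F" "g \<in> F" shows "(\<lambda>x. f x + g x) \<in> F"
proof -
  have "(\<lambda>x. 1 * f x + 1 * g x) \<in> F" using assms unfolding linear_family_def by blast
  thus ?thesis by simp
qed

lemma lf_sum:
  assumes "linear_family F" "finite A" "\<forall>a\<in>A. g a \<in> F"
  shows "(\<lambda>x. \<Sum>a\<in>A. g a x) \<in> F"
  using assms(2,3)
proof (induction A rule: finite_induct)
  case empty
  then show ?case using assms(1) unfolding linear_family_def by simp
next
  case (insert a A)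
  then show ?case using lf_add[OF assms(1), of "g a" "\<lambda>x. \<Sum>a\<in>A. g a x"] by simp
qed

lemma sdelta: fixes a :: "'b::finite" shows "(\<Sum>l\<in>UNIV. (if l = a then c else 0) * (x l::'a::comm_ring_1)) = c * x a"
proof -
  have "(\<Sum>l\<in>UNIV. (if l = a then c else 0) * x l) = (\<Sum>l\<in>(UNIV::'b::finite set). if l = a then c * x l else 0)"
    by (rule sum.cong) auto
  thus ?thesis using sum.delta[of UNIV a "\<lambda>l. c * x l"] by simp
qed

lemma affine_upd1: "affine_map (\<lambda>x::'n::finite \<Rightarrow> 'p::prime_card mod_ring. x(i := c * x i + b0))"
  unfolding affine_map_def
proof (intro exI allI)
  fix x :: "'n \<Rightarrow> 'p mod_ring"
  show "x(i := c * x i + b0) = (\<lambda>k. (\<Sum>l\<in>UNIV. (\<lambda>k l. if k = i then (if l = i then c else 0) else (if l = k then 1 else 0)) k l * x l) + (\<lambda>k. if k = i then b0 else 0) k)"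
  proof
    fix k show "(x(i := c * x i + b0)) k = (\<Sum>l\<in>UNIV. (\<lambda>k l. if k = i then (if l = i then c else 0) else (if l = k then 1 else 0)) k l * x l) + (\<lambda>k. if k = i then b0 else 0) k"
      by (cases "k = i") (simp_all add: sdelta)
  qed
qed

lemma affine_upd2: assumes "j \<noteq> i"
  shows "affine_map (\<lambda>x::'n::finite \<Rightarrow> 'p::prime_card mod_ring. x(i := x i + x j))"
  unfolding affine_map_def
proof (intro exI allI)
  fix x :: "'n \<Rightarrow> 'p mod_ring"
  show "x(i := x i + x j) = (\<lambda>k. (\<Sum>l\<in>UNIV. (\<lambda>k l. if k = i then (if l = i then 1 else 0) + (if l = j then 1 else 0) else (if l = k then 1 else 0)) k l * x l) + (\<lambda>k. 0) k)"
  proof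
    fix k show "(x(i := x i + x j)) k = (\<Sum>l\<in>UNIV. (\<lambda>k l. if k = i then (if l = i then 1 else 0) + (if l = j then 1 else 0) else (if l = k then 1 else 0)) k l * x l) + (\<lambda>k. 0) k"
    proof (cases "k = i")
      case True
      have "(\<Sum>l\<in>UNIV. ((if l = i then 1 else 0) + (if l = j then 1 else 0)) * x l)
         = (\<Sum>l\<in>UNIV. (if l = i then 1 else 0) * x l) + (\<Sum>l\<in>UNIV. (if l = j then 1 else 0) * x l)"
        by (simp only: distrib_right sum.distrib)
      also have "\<dots> = x i + x j" by (simp only: sdelta mult_1)
      finally show ?thesis using True by (simp only: if_True fun_upd_same add_0_right simp_thms)
    next
      case False
      have "(\<Sum>l\<in>UNIV. (if l = k then 1 else 0) * x l) = x k" by (simp only: sdelta mult_1)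
      thus ?thesis using False by simp
    qed
  qed
qed

lemma fermat1: "(t::'p::prime_card mod_ring) \<noteq> 0 \<Longrightarrow> t ^ (CARD('p) - 1) = 1"
proof -
  assume t: "t \<noteq> 0"
  have "CARD('p) = Suc (CARD('p) - 1)" using prime_card[where 'a='p] 
    using prime_gt_0_nat[OF prime_card[where 'a='p]] by simp
  hence "t ^ (CARD('p) - 1) * t = 1 * t" using fermat_theorem_mod_ring[of t]
    by (metis mult.commute mult_1 power_Suc)
  thus ?thesis using t by simp
qed

lemma pshift: "m \<ge> CARD('p) \<Longrightarrow> (t::'p::prime_card mod_ring) ^ m = t ^ (m - (CARD('p) - 1))"
proof -
  assume m: "m \<ge> CARD('p)"
  have "t ^ m = t ^ ((m - CARD('p)) + CARD('p))" using m by simp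
  also have "\<dots> = t ^ (m - CARD('p)) * t ^ CARD('p)" by (rule power_add)
  also have "\<dots> = t ^ (m - CARD('p)) * t" by simp
  also have "\<dots> = t ^ (Suc (m - CARD('p)))" by simp
  also have "Suc (m - CARD('p)) = m - (CARD('p) - 1)" using m prime_card[where 'a='p]
    using prime_gt_0_nat[OF prime_card[where 'a='p]] by linarith
  finally show ?thesis .
qed

lemma ps_top: "(\<Sum>t\<in>UNIV. (t::'p::prime_card mod_ring) ^ (CARD('p) - 1)) = -1"
proof -
  have p1: "CARD('p) - 1 > 0" using prime_gt_1_nat[OF prime_card[where 'a='p]] by simp
  have "(\<Sum>t\<in>UNIV. (t::'p mod_ring) ^ (CARD('p) - 1)) = (\<Sum>t\<in>UNIV. if (t::'p mod_ring) = 0 then 0 else 1)"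
  proof (rule sum.cong[OF refl])
    fix t :: "'p mod_ring" show "t ^ (CARD('p) - 1) = (if t = 0 then 0 else 1)"
      using p1 fermat1[of t] by (cases "t = 0") (simp_all add: zero_power)
  qed
  also have "\<dots> = of_nat (card (UNIV - {0::'p mod_ring}))"
    by (simp add: sum.If_cases Compl_eq_Diff_UNIV)
  also have "card (UNIV - {0::'p mod_ring}) = CARD('p) - 1" by (simp add: card_Diff_singleton)
  also have "(of_nat (CARD('p) - 1) :: 'p mod_ring) = of_nat (CARD('p)) - 1"
    using prime_card[where 'a='p] by (simp add: of_nat_diff prime_ge_1_nat)
  also have "\<dots> = -1" by simp
  finally show ?thesis .
qed

lemma ps_small: assumes "m < CARD('p) - 1"
  shows "(\<Sum>t\<in>UNIV. (t::'p::prime_card mod_ring) ^ m) = 0"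
proof (cases "m = 0")
  case True thus ?thesis by simp
next
  case False
  define q :: "'p mod_ring poly" where "q = monom 1 m + [:-1:]"
  have dq: "degree q = m" using False unfolding q_def using degree_add_eq_left[of "[:-1:]" "monom (1::'p mod_ring) m"] by (simp add: degree_monom_eq)
  hence "q \<noteq> 0" using False by auto
  hence "card {x. poly q x = 0} \<le> m" using card_poly_roots_bound[of q] dq by simp
  moreover have "{x. poly q x = 0} = {x. x ^ m = 1}" unfolding q_def by (auto simp: poly_monom)
  ultimately have c1: "card {x::'p mod_ring. x ^ m = 1} < card (UNIV - {0::'p mod_ring})"
    using assms by (simp add: card_Diff_singleton)
  have "\<not> (UNIV - {0::'p mod_ring}) \<subseteq> {x. x ^ m = 1}"
  proof
    assume "(UNIV - {0::'p mod_ring}) \<subseteq> {x. x ^ m = 1}"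
    hence "card (UNIV - {0::'p mod_ring}) \<le> card {x::'p mod_ring. x ^ m = 1}" by (intro card_mono) auto
    thus False using c1 by simp
  qed
  then obtain c :: "'p mod_ring" where c: "c \<noteq> 0" "c ^ m \<noteq> 1" by auto
  have "(\<Sum>t\<in>UNIV. t ^ m) = (\<Sum>t\<in>UNIV. (c * t) ^ m)"
    by (rule sum.reindex_bij_witness[of _ "\<lambda>t. c * t" "\<lambda>t. inverse c * t"]) (use c in \<open>auto simp: mult.assoc[symmetric]\<close>)
  also have "\<dots> = c ^ m * (\<Sum>t\<in>UNIV. t ^ m)" by (simp add: power_mult_distrib sum_distrib_left)
  finally have eq: "(\<Sum>t\<in>UNIV. t ^ m) = c ^ m * (\<Sum>t\<in>UNIV. t ^ m)" .
  have "(1 - c ^ m) * (\<Sum>t\<in>UNIV. t ^ m) = (\<Sum>t\<in>UNIV. t ^ m) - c ^ m * (\<Sum>t\<in>UNIV. t ^ m)"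
    by (simp add: left_diff_distrib)
  also have "\<dots> = 0" using eq by simp
  finally have "(1 - c ^ m) * (\<Sum>t\<in>UNIV. t ^ m) = 0" .
  moreover have "1 - c ^ m \<noteq> 0" using c by simp
  ultimately show ?thesis by simp
qed


lemma ps_sel:
  assumes "l \<le> d" "d < CARD('p)" "0 < l0" "l0 \<le> d"
  shows "(\<Sum>t\<in>UNIV. (t::'p::prime_card mod_ring) ^ (CARD('p) - 1 - l0 + l)) = (if l = l0 then -1 else 0)"
proof -
  consider "l = l0" | "l < l0" | "l0 < l" by linarith
  thus ?thesis
  proof cases
    case 1 thus ?thesis using assms ps_top[where 'p='p] by simp
  next
    case 2 thus ?thesis using assms ps_small[where 'p='p] by simp
  next
    case 3
    have "(\<Sum>t\<in>UNIV. (t::'p mod_ring) ^ (CARD('p) - 1 - l0 + l)) = (\<Sum>t\<in>UNIV. (t::'p mod_ring) ^ (l - l0))"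
    proof (rule sum.cong[OF refl])
      fix t :: "'p mod_ring"
      have "t ^ (CARD('p) - 1 - l0 + l) = t ^ ((CARD('p) - 1 - l0 + l) - (CARD('p) - 1))"
        by (rule pshift) (use 3 assms in linarith)
      also have "(CARD('p) - 1 - l0 + l) - (CARD('p) - 1) = l - l0" using 3 assms by linarith
      finally show "t ^ (CARD('p) - 1 - l0 + l) = t ^ (l - l0)" .
    qed
    also have "\<dots> = 0" by (rule ps_small) (use 3 assms in linarith)
    finally show ?thesis using 3 by simp
  qed
qed

lemma zsum: "(\<Sum>l\<le>(d::nat). (0::'a::comm_ring_1) ^ l * g l) = g 0"
proof -
  have "(\<Sum>l\<le>d. (0::'a) ^ l * g l) = (\<Sum>l\<le>d. if l = 0 then g l else 0)"
    by (rule sum.cong[OF refl]) (simp add: power_0_left)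
  thus ?thesis by simp
qed

lemma extract_coef:
  fixes F :: "(('n::finite \<Rightarrow> 'p::prime_card mod_ring) \<Rightarrow> 'p mod_ring) set"
    and H :: "nat \<Rightarrow> ('n \<Rightarrow> 'p mod_ring) \<Rightarrow> 'p mod_ring"
  assumes lin: "linear_family F" and ai: "affine_invariant F"
    and indep: "\<And>l x y. H l (x(i := y)) = H l x"
    and d: "d < CARD('p)"
    and f: "(\<lambda>x. \<Sum>l\<le>d. x i ^ l * H l x) \<in> F"
    and l0: "l0 \<le> d"
  shows "(\<lambda>x. x i ^ l0 * H l0 x) \<in> F"
proof -
  have comp: "(\<lambda>x. \<Sum>l\<le>d. (c * x i + b0) ^ l * H l x) \<in> F" for c b0
  proof -
    have "(\<lambda>x. \<Sum>l\<le>d. x i ^ l * H l x) \<circ> (\<lambda>x. x(i := c * x i + b0)) \<in> F"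
      using ai f affine_upd1 unfolding affine_invariant_def by blast
    moreover have "(\<lambda>x. \<Sum>l\<le>d. x i ^ l * H l x) \<circ> (\<lambda>x. x(i := c * x i + b0)) = (\<lambda>x. \<Sum>l\<le>d. (c * x i + b0) ^ l * H l x)"
      by (rule ext) (simp add: indep)
    ultimately show ?thesis by simp
  qed
  show ?thesis
  proof (cases "l0 = 0")
    case True
    have "(\<lambda>x. \<Sum>l\<le>d. (0 * x i + 0) ^ l * H l x) = (\<lambda>x. x i ^ l0 * H l0 x)"
      using True by (simp add: zsum)
    thus ?thesis using comp[of 0 0] by simp
  next
    case False
    define a where "a = CARD('p) - 1 - l0"
    have G: "(\<lambda>x. \<Sum>t\<in>UNIV. t ^ a * (\<Sum>l\<le>d. (t * x i + 0) ^ l * H l x)) \<in> F"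
    proof (rule lf_sum[OF lin])
      show "\<forall>t\<in>UNIV. (\<lambda>x. t ^ a * (\<Sum>l\<le>d. (t * x i + 0) ^ l * H l x)) \<in> F"
      proof
        fix t :: "'p mod_ring"
        show "(\<lambda>x. t ^ a * (\<Sum>l\<le>d. (t * x i + 0) ^ l * H l x)) \<in> F"
          by (rule lf_scale[OF lin comp])
      qed
    qed simp
    have "(\<Sum>t\<in>UNIV. t ^ a * (\<Sum>l\<le>d. (t * x i + 0) ^ l * H l x)) = - (x i ^ l0 * H l0 x)" for x
    proof -
      have "(\<Sum>t\<in>UNIV. t ^ a * (\<Sum>l\<le>d. (t * x i + 0) ^ l * H l x))
          = (\<Sum>t\<in>UNIV. \<Sum>l\<le>d. t ^ (a + l) * (x i ^ l * H l x))"
        by (simp add: sum_distrib_left power_mult_distrib power_add mult.assoc)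
      also have "\<dots> = (\<Sum>l\<le>d. \<Sum>t\<in>UNIV. t ^ (a + l) * (x i ^ l * H l x))"
        by (rule sum.swap)
      also have "\<dots> = (\<Sum>l\<le>d. (\<Sum>t\<in>UNIV. t ^ (a + l)) * (x i ^ l * H l x))"
        by (simp add: sum_distrib_right)
      also have "\<dots> = (\<Sum>l\<le>d. (if l = l0 then -1 else 0) * (x i ^ l * H l x))"
        by (rule sum.cong[OF refl]) (use ps_sel[OF _ d _ l0] False in \<open>auto simp: a_def\<close>)
      also have "\<dots> = (\<Sum>l\<le>d. if l = l0 then - (x i ^ l * H l x) else 0)"
        by (rule sum.cong[OF refl]) auto
      also have "\<dots> = - (x i ^ l0 * H l0 x)" using l0 by simp
      finally show ?thesis .
    qed
    hence "(\<lambda>x. \<Sum>t\<in>UNIV. t ^ a * (\<Sum>l\<le>d. (t * x i + 0) ^ l * H l x)) = (\<lambda>x. - (x i ^ l0 * H l0 x))"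
      by (rule ext)
    hence "(\<lambda>x. - (x i ^ l0 * H l0 x)) \<in> F" using G by simp
    from lf_scale[OF lin this, of "-1"] show ?thesis by simp
  qed
qed


definition restm :: "('n::finite \<Rightarrow> nat) \<Rightarrow> 'n \<Rightarrow> ('n \<Rightarrow> 'p::prime_card mod_ring) \<Rightarrow> 'p mod_ring" where
  "restm e i x = (\<Prod>k\<in>UNIV - {i}. x k ^ e k)"

lemma mono_split: "monomial_fun e x = x i ^ e i * restm e i x"
  unfolding monomial_fun_def restm_def by (simp add: prod.remove[of UNIV i])

lemma restm_upd: "restm e i (x(i := y)) = restm e i x"
  unfolding restm_def by (rule prod.cong) auto

lemma restm_upde: "restm (e(i := v)) i = restm e i"
  unfolding restm_def by (intro ext prod.cong) auto

lemma restm_split: assumes "j \<noteq> i"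
  shows "restm e i x = x j ^ e j * (\<Prod>k\<in>UNIV - {i} - {j}. x k ^ e k)"
  unfolding restm_def using assms by (simp add: prod.remove[of "UNIV - {i}" j])

lemma choose_nz:
  assumes "n < CARD('p)" "k \<le> n"
  shows "(of_nat (n choose k) :: 'p::prime_card mod_ring) \<noteq> 0"
proof
  assume "(of_nat (n choose k) :: 'p mod_ring) = 0"
  hence "CARD('p) dvd (n choose k)" by (rule of_nat_0_mod_ring_dvd)
  hence "CARD('p) dvd fact n" using binomial_fact_lemma[OF assms(2)] by (metis dvd_mult)
  hence "CARD('p) \<le> n" using prime_dvd_fact_iff[OF prime_card] by blast
  thus False using assms by simp
qed

lemma dec_exp:
  fixes F :: "(('n::finite \<Rightarrow> 'p::prime_card mod_ring) \<Rightarrow> 'p mod_ring) set"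
  assumes lin: "linear_family F" and ai: "affine_invariant F"
    and m: "monomial_fun e \<in> F" and ei: "e i < CARD('p)" and l: "l \<le> e i"
  shows "monomial_fun (e(i := l)) \<in> F"
proof -
  define H where "H = (\<lambda>l x. (of_nat (e i choose l) :: 'p mod_ring) * restm e i x)"
  have "monomial_fun e \<circ> (\<lambda>x. x(i := 1 * x i + 1)) \<in> F"
    using ai m affine_upd1 unfolding affine_invariant_def by blast
  moreover have "monomial_fun e \<circ> (\<lambda>x. x(i := 1 * x i + 1)) = (\<lambda>x. \<Sum>l\<le>e i. x i ^ l * H l x)"
  proof
    fix x :: "'n \<Rightarrow> 'p mod_ring"
    have "(monomial_fun e \<circ> (\<lambda>x. x(i := 1 * x i + 1))) x = (x i + 1) ^ e i * restm e i x"
      by (simp add: mono_split[of e _ i] restm_upd)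
    also have "\<dots> = (\<Sum>l\<le>e i. x i ^ l * H l x)"
      by (simp add: binomial_ring H_def sum_distrib_left mult_ac)
    finally show "(monomial_fun e \<circ> (\<lambda>x. x(i := 1 * x i + 1))) x = (\<Sum>l\<le>e i. x i ^ l * H l x)" .
  qed
  ultimately have A: "(\<lambda>x. \<Sum>l\<le>e i. x i ^ l * H l x) \<in> F" by simp
  have ind: "\<And>l x y. H l (x(i := y)) = H l x" by (simp add: H_def restm_upd)
  have "(\<lambda>x. x i ^ l * H l x) \<in> F"
    by (rule extract_coef[OF lin ai ind ei A l])
  from lf_scale[OF lin this, of "inverse (of_nat (e i choose l))"]
  have "(\<lambda>x. inverse (of_nat (e i choose l)) * (x i ^ l * H l x)) \<in> F" .
  moreover have "(\<lambda>x. inverse (of_nat (e i choose l)) * (x i ^ l * H l x)) = monomial_fun (e(i := l))"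
  proof
    fix x :: "'n \<Rightarrow> 'p mod_ring"
    show "inverse (of_nat (e i choose l)) * (x i ^ l * H l x) = monomial_fun (e(i := l)) x"
      using choose_nz[OF ei l] by (simp add: H_def mono_split[of _ _ i] restm_upde field_simps)
  qed
  ultimately show ?thesis by simp
qed

lemma transfer_exp:
  fixes F :: "(('n::finite \<Rightarrow> 'p::prime_card mod_ring) \<Rightarrow> 'p mod_ring) set"
  assumes lin: "linear_family F" and ai: "affine_invariant F"
    and m: "monomial_fun e \<in> F" and ei: "e i < CARD('p)" and e1: "1 \<le> e i" and ji: "j \<noteq> i"
  shows "monomial_fun (e(i := e i - 1, j := e j + 1)) \<in> F"
proof -
  define H where "H = (\<lambda>l x. (of_nat (e i choose l) :: 'p mod_ring) * (x j ^ (e i - l) * restm e i x))"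
  have "monomial_fun e \<circ> (\<lambda>x. x(i := x i + x j)) \<in> F"
    using ai m affine_upd2[OF ji] unfolding affine_invariant_def by blast
  moreover have "monomial_fun e \<circ> (\<lambda>x. x(i := x i + x j)) = (\<lambda>x. \<Sum>l\<le>e i. x i ^ l * H l x)"
  proof
    fix x :: "'n \<Rightarrow> 'p mod_ring"
    have "(monomial_fun e \<circ> (\<lambda>x. x(i := x i + x j))) x = (x i + x j) ^ e i * restm e i x"
      by (simp add: mono_split[of e _ i] restm_upd)
    also have "\<dots> = (\<Sum>l\<le>e i. x i ^ l * H l x)"
      by (simp add: binomial_ring H_def sum_distrib_left mult_ac)
    finally show "(monomial_fun e \<circ> (\<lambda>x. x(i := x i + x j))) x = (\<Sum>l\<le>e i. x i ^ l * H l x)" .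
  qed
  ultimately have A: "(\<lambda>x. \<Sum>l\<le>e i. x i ^ l * H l x) \<in> F" by simp
  have ind: "\<And>l x y. H l (x(i := y)) = H l x" using ji by (simp add: H_def restm_upd)
  have "(\<lambda>x. x i ^ (e i - 1) * H (e i - 1) x) \<in> F"
    by (rule extract_coef[OF lin ai ind ei A]) simp
  from lf_scale[OF lin this, of "inverse (of_nat (e i choose (e i - 1)))"]
  have "(\<lambda>x. inverse (of_nat (e i choose (e i - 1))) * (x i ^ (e i - 1) * H (e i - 1) x)) \<in> F" .
  moreover have "(\<lambda>x. inverse (of_nat (e i choose (e i - 1))) * (x i ^ (e i - 1) * H (e i - 1) x)) = monomial_fun (e(i := e i - 1, j := e j + 1))"
  proof
    fix x :: "'n \<Rightarrow> 'p mod_ring"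
    have nz: "(of_nat (e i choose (e i - 1)) :: 'p mod_ring) \<noteq> 0" using choose_nz[OF ei, of "e i - 1"] by simp
    have ei1: "e i - (e i - Suc 0) = 1" using e1 by simp
    have pc: "(\<Prod>k\<in>UNIV - {i} - {j}. x k ^ (e(i := e i - 1, j := e j + 1)) k) = (\<Prod>k\<in>UNIV - {i} - {j}. x k ^ e k)"
      by (rule prod.cong) auto
    have r: "restm (e(i := e i - 1, j := e j + 1)) i x = x j * restm e i x"
      unfolding restm_split[OF ji, of "e(i := e i - 1, j := e j + 1)"] restm_split[OF ji, of e] pc
      using ji by simp
    have "monomial_fun (e(i := e i - 1, j := e j + 1)) x = x i ^ (e i - 1) * (x j * restm e i x)"
    proof -
      have Ei: "(e(i := e i - 1, j := e j + 1)) i = e i - 1" using ji by simp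
      show ?thesis unfolding mono_split[of "e(i := e i - 1, j := e j + 1)" x i] Ei r ..
    qed
    thus "inverse (of_nat (e i choose (e i - 1))) * (x i ^ (e i - 1) * H (e i - 1) x) = monomial_fun (e(i := e i - 1, j := e j + 1)) x"
      using nz by (simp add: H_def ei1 field_simps)
  qed
  ultimately show ?thesis by simp
qed


lemma sum_upd_nat:
  fixes f :: "'n::finite \<Rightarrow> nat"
  shows "(\<Sum>k\<in>UNIV. (f(a := v)) k) + f a = (\<Sum>k\<in>UNIV. f k) + v"
proof -
  have 1: "(\<Sum>k\<in>UNIV. (f(a := v)) k) = (f(a:=v)) a + (\<Sum>k\<in>UNIV-{a}. (f(a := v)) k)"
    by (rule sum.remove) auto
  have 2: "(\<Sum>k\<in>UNIV. f k) = f a + (\<Sum>k\<in>UNIV-{a}. f k)" by (rule sum.remove) auto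
  have 3: "(\<Sum>k\<in>UNIV-{a}. (f(a := v)) k) = (\<Sum>k\<in>UNIV-{a}. f k)" by (rule sum.cong) auto
  show ?thesis unfolding 1 2 3 by simp
qed

definition mdist :: "('n::finite \<Rightarrow> nat) \<Rightarrow> ('n \<Rightarrow> nat) \<Rightarrow> nat" where
  "mdist g h = (\<Sum>k\<in>UNIV. (g k - h k) + (h k - g k))"

lemma main_ind:
  fixes F :: "(('n::finite \<Rightarrow> 'p::prime_card mod_ring) \<Rightarrow> 'p mod_ring) set"
    and e e' :: "'n \<Rightarrow> nat"
  assumes lin: "linear_family F" and ai: "affine_invariant F"
    and e'p: "\<forall>i. e' i < CARD('p)"
  shows "(\<forall>i. e i < CARD('p)) \<Longrightarrow> monomial_fun e \<in> F \<Longrightarrow> deg1 e' \<le> deg1 e \<Longrightarrow> monomial_fun e' \<in> F"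
proof (induction "mdist e e'" arbitrary: e rule: less_induct)
  case (less e)
  show ?case
  proof (cases "\<exists>i. e' i < e i")
    case True
    then obtain i where i: "e' i < e i" by blast
    show ?thesis
    proof (cases "\<exists>j. e j < e' j")
      case True
      then obtain j where j: "e j < e' j" by blast
      have ji: "j \<noteq> i" using i j by auto
      define e2 where "e2 = e(i := e i - 1, j := e j + 1)"
      have M2: "monomial_fun e2 \<in> F" unfolding e2_def
        by (rule transfer_exp[OF lin ai less.prems(2)]) (use less.prems(1) i ji in auto)
      have p2: "\<forall>k. e2 k < CARD('p)"
      proof
        fix k show "e2 k < CARD('p)"
        proof -
          have a: "e i < CARD('p)" "e k < CARD('p)" "e' j < CARD('p)" using less.prems(1) e'p by auto
          show ?thesis using a j unfolding e2_def by (cases "k = j"; cases "k = i") auto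
        qed
      qed
      have s1: "deg1 (e(i := e i - 1)) + e i = deg1 e + (e i - 1)"
        unfolding deg1_def by (rule sum_upd_nat)
      have s2: "deg1 e2 + (e(i := e i - 1)) j = deg1 (e(i := e i - 1)) + (e j + 1)"
        unfolding deg1_def e2_def by (rule sum_upd_nat)
      have d2: "deg1 e2 = deg1 e" using s1 s2 ji i by simp
      have mu: "mdist e2 e' < mdist e e'"
        unfolding mdist_def
      proof (rule sum_strict_mono_ex1)
        show "\<forall>k\<in>UNIV. e2 k - e' k + (e' k - e2 k) \<le> e k - e' k + (e' k - e k)"
          unfolding e2_def using i j ji by auto
        show "\<exists>k\<in>UNIV. e2 k - e' k + (e' k - e2 k) < e k - e' k + (e' k - e k)"
          unfolding e2_def using i j ji by (intro bexI[of _ i]) auto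
      qed simp
      show ?thesis by (rule less.hyps[OF mu p2 M2]) (use d2 less.prems(3) in simp)
    next
      case False
      hence ge: "\<forall>j. e' j \<le> e j" by (auto simp: not_less)
      define e2 where "e2 = e(i := e' i)"
      have M2: "monomial_fun e2 \<in> F" unfolding e2_def
        by (rule dec_exp[OF lin ai less.prems(2)]) (use less.prems(1) i in auto)
      have p2: "\<forall>k. e2 k < CARD('p)" using less.prems(1) e'p unfolding e2_def by auto
      have d2: "deg1 e' \<le> deg1 e2" unfolding deg1_def
        by (rule sum_mono) (use ge in \<open>auto simp: e2_def\<close>)
      have mu: "mdist e2 e' < mdist e e'"
        unfolding mdist_def
      proof (rule sum_strict_mono_ex1)
        show "\<forall>k\<in>UNIV. e2 k - e' k + (e' k - e2 k) \<le> e k - e' k + (e' k - e k)"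
          unfolding e2_def using i by auto
        show "\<exists>k\<in>UNIV. e2 k - e' k + (e' k - e2 k) < e k - e' k + (e' k - e k)"
          unfolding e2_def using i by (intro bexI[of _ i]) auto
      qed simp
      show ?thesis by (rule less.hyps[OF mu p2 M2 d2])
    qed
  next
    case False
    hence le: "\<forall>i. e i \<le> e' i" by (auto simp: not_less)
    have "e = e'"
    proof (rule ccontr)
      assume "e \<noteq> e'"
      then obtain k where "e k \<noteq> e' k" by auto
      hence k: "e k < e' k" using le[rule_format, of k] by simp
      have "deg1 e < deg1 e'" unfolding deg1_def
        by (rule sum_strict_mono_ex1) (use le k in auto)
      thus False using less.prems(3) by simp
    qed
    thus ?thesis using less.prems(2) by simp
  qed
qed

theorem lemma3p1:
  fixes F :: "(('n::finite \<Rightarrow> 'p::prime_card mod_ring) \<Rightarrow> 'p mod_ring) set"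
    and e e' :: "'n \<Rightarrow> nat"
  assumes "linear_family F"
    and "affine_invariant F"
    and "\<forall>i. e i < CARD('p)"
    and "monomial_fun e \<in> F"
    and "\<forall>i. e' i < CARD('p)"
    and "deg1 e' \<le> deg1 e"
  shows "monomial_fun e' \<in> F"
  using main_ind[OF assms(1,2,5) assms(3,4,6)] .

end
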